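(* Let $v\ge 2$ be an integer and $\theta\in[0,1]$. In the tipsy cop and drunken robber game on the complete graph $K_v$ with cop and robber starting at distinct vertices, let $X$ be the capture time, i.e. the number of the move at which the capture occurs. Then \[ \mathbb{E}[X]=\frac{(2v-3)(v-1)}{(v-1)^2-\theta(v-2)^2}. \]
   Context: Tipsy cop and drunken robber game on a finite connected graph $G$: a cop and a robber are placed at distinct vertices. Moves are numbered $1,2,3,\dots$; the robber makes the odd-numbered moves and the cop the even-numbered moves, and on each move the mover must move to a vertex adjacent to its current vertex (staying put is not allowed). The robber always moves to a neighbor chosen uniformly at random. The cop, independently at each of her moves, with probability $\theta$ moves to a neighbor chosen uniformly at random, and with probability $1-\theta$ makes a directed move to a neighbor lying on a shortest path to the robber's current vertex (in particular onto the robber's vertex if it is adjacent). All random choices are independent. The robber is captured (and the game ends) as soon as both occupy the same vertex, whether the robber moves onto the cop or the cop moves onto the robber. *)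

theory Defs
  imports "HOL-Probability.Probability"
begin

text \<open>A graph is given by a vertex set V and a symmetric adjacency relation adj.
  Game states: Play c r (cop at c, robber at r, game still running) or
  Caught n (capture happened at move n; absorbing).\<close>

datatype 'a gstate = Play 'a 'a | Caught nat

definition nbrs :: "'a set \<Rightarrow> ('a \<Rightarrow> 'a \<Rightarrow> bool) \<Rightarrow> 'a \<Rightarrow> 'a set" where
  "nbrs V adj x = {y \<in> V. adj x y}"

fun reach :: "'a set \<Rightarrow> ('a \<Rightarrow> 'a \<Rightarrow> bool) \<Rightarrow> nat \<Rightarrow> 'a \<Rightarrow> 'a \<Rightarrow> bool" where
  "reach V adj 0 x y = (x = y)"
| "reach V adj (Suc n) x y = (\<exists>z\<in>nbrs V adj x. reach V adj n z y)"

definition gdist :: "'a set \<Rightarrow> ('a \<Rightarrow> 'a \<Rightarrow> bool) \<Rightarrow> 'a \<Rightarrow> 'a \<Rightarrow> nat" where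
  "gdist V adj x y = (LEAST n. reach V adj n x y)"

definition toward :: "'a set \<Rightarrow> ('a \<Rightarrow> 'a \<Rightarrow> bool) \<Rightarrow> 'a \<Rightarrow> 'a \<Rightarrow> 'a set" where
  "toward V adj c r = {w \<in> nbrs V adj c. gdist V adj w r + 1 = gdist V adj c r}"

definition game_step ::
  "'a set \<Rightarrow> ('a \<Rightarrow> 'a \<Rightarrow> bool) \<Rightarrow> real \<Rightarrow> nat \<Rightarrow> 'a gstate \<Rightarrow> 'a gstate pmf" where
  "game_step V adj \<theta> n s = (case s of
      Caught m \<Rightarrow> return_pmf (Caught m)
    | Play c r \<Rightarrow>
        (if odd n then
           map_pmf (\<lambda>r'. if r' = c then Caught n else Play c r') (pmf_of_set (nbrs V adj r))
         else
           bind_pmf (bernoulli_pmf \<theta>) (\<lambda>b.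
             map_pmf (\<lambda>c'. if c' = r then Caught n else Play c' r)
               (if b then pmf_of_set (nbrs V adj c) else pmf_of_set (toward V adj c r)))))"

fun game_dist ::
  "'a set \<Rightarrow> ('a \<Rightarrow> 'a \<Rightarrow> bool) \<Rightarrow> real \<Rightarrow> 'a \<Rightarrow> 'a \<Rightarrow> nat \<Rightarrow> 'a gstate pmf" where
  "game_dist V adj \<theta> c0 r0 0 = return_pmf (Play c0 r0)"
| "game_dist V adj \<theta> c0 r0 (Suc n) =
     bind_pmf (game_dist V adj \<theta> c0 r0 n) (game_step V adj \<theta> (Suc n))"

definition capture_prob ::
  "'a set \<Rightarrow> ('a \<Rightarrow> 'a \<Rightarrow> bool) \<Rightarrow> real \<Rightarrow> 'a \<Rightarrow> 'a \<Rightarrow> nat \<Rightarrow> real" where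
  "capture_prob V adj \<theta> c0 r0 n = pmf (game_dist V adj \<theta> c0 r0 n) (Caught n)"

definition Kv :: "nat \<Rightarrow> nat set" where "Kv v = {0..<v}"
definition Kadj :: "nat \<Rightarrow> nat \<Rightarrow> bool" where "Kadj x y = (x \<noteq> y)"

end

theory Submission
  imports Defs
begin

lemma measure_bind_pmf': "measure (bind_pmf M f) A = (\<integral>x. measure (f x) A \<partial>measure_pmf M)"
proof -
  have "measure (bind_pmf M f) A = enn2real (emeasure (bind_pmf M f) A)" by (simp add: measure_def)
  also have "\<dots> = enn2real (\<integral>\<^sup>+x. ennreal (measure (f x) A) \<partial>M)"
    by (subst emeasure_bind_pmf) (simp only: measure_pmf.emeasure_eq_measure)
  also have "\<dots> = (\<integral>x. measure (f x) A \<partial>measure_pmf M)"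
    by (subst nn_integral_eq_integral) (auto intro!: measure_pmf.integrable_const_bound[where B=1])
  finally show ?thesis .
qed

lemma integral_pmf_indicator:
  assumes "\<And>y. y \<in> set_pmf M \<Longrightarrow> g y = c * indicator A y"
  shows "(\<integral>y. g y \<partial>measure_pmf M) = c * measure M A"
proof -
  have "(\<integral>y. g y \<partial>measure_pmf M) = (\<integral>y. c * indicator A y \<partial>measure_pmf M)"
    by (rule integral_cong_AE) (auto intro!: AE_pmfI simp: assms)
  also have "\<dots> = c * measure M A" by simp
  finally show ?thesis .
qed

lemma nbrs_K: "r < v \<Longrightarrow> nbrs (Kv v) Kadj r = {0..<v} - {r}"
  unfolding nbrs_def Kv_def Kadj_def by auto

lemma reach1_K: "x \<noteq> y \<Longrightarrow> y < v \<Longrightarrow> reach (Kv v) Kadj 1 x y"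
  by (simp add: nbrs_def Kv_def Kadj_def)

lemma gdist_self: "gdist V adj x x = 0"
  unfolding gdist_def by simp

lemma gdist_K_ne: assumes "x \<noteq> y" "y < v" shows "gdist (Kv v) Kadj x y = 1"
  unfolding gdist_def
proof (rule Least_equality)
  show "reach (Kv v) Kadj 1 x y" using reach1_K assms by blast
next
  fix n assume "reach (Kv v) Kadj n x y"
  then show "1 \<le> n" using assms by (cases n) auto
qed

lemma toward_K: assumes "c \<noteq> r" "c < v" "r < v" shows "toward (Kv v) Kadj c r = {r}"
proof -
  have "toward (Kv v) Kadj c r = {w \<in> {0..<v} - {c}. gdist (Kv v) Kadj w r = 0}"
    unfolding toward_def using assms by (simp add: nbrs_K gdist_K_ne)
  also have "\<dots> = {r}" using assms gdist_K_ne[of _ r v] gdist_self by force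
  finally show ?thesis .
qed

definition Valid :: "nat \<Rightarrow> nat gstate set" where
  "Valid v = {Play c r | c r. c < v \<and> r < v \<and> c \<noteq> r}"

definition prK :: "nat \<Rightarrow> real \<Rightarrow> nat \<Rightarrow> real" where
  "prK v \<theta> m = (if odd m then 1 / (real v - 1) else \<theta> / (real v - 1) + (1 - \<theta>))"

lemma step_valid:
  assumes v: "v \<ge> 2" and th: "0 \<le> \<theta>" "\<theta> \<le> 1" and y: "y \<in> Valid v"
  shows "pmf (game_step (Kv v) Kadj \<theta> m y) (Caught m) = prK v \<theta> m
    \<and> measure (game_step (Kv v) Kadj \<theta> m y) (Valid v) = 1 - prK v \<theta> m
    \<and> set_pmf (game_step (Kv v) Kadj \<theta> m y) \<subseteq> Valid v \<union> {Caught m}"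
proof -
  obtain c r where y: "y = Play c r" and cr: "c < v" "r < v" "c \<noteq> r"
    using y unfolding Valid_def by auto
  have Nr: "nbrs (Kv v) Kadj r = {0..<v} - {r}" using cr by (simp add: nbrs_K)
  have Nc: "nbrs (Kv v) Kadj c = {0..<v} - {c}" using cr by (simp add: nbrs_K)
  have T: "toward (Kv v) Kadj c r = {r}" using toward_K cr by blast
  have cardN: "card ({0..<v} - {x}) = v - 1" if "x < v" for x using that by simp
  have cardN2: "card ({0..<v} - {x} - {z}) = v - 2" if "x < v" "z < v" "x \<noteq> z" for x z
    using that by (simp add: card_Diff_subset)
  have ne: "{0..<v} - {x} \<noteq> {}" if "x < v" for x
  proof -
    have "card ({0..<v} - {x}) > 0" using cardN[OF that] v by simp
    then show ?thesis by (metis card.empty less_irrefl)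
  qed
  have spm: "set_pmf (pmf_of_set ({0..<v} - {x})) = {0..<v} - {x}" if "x < v" for x
    by (rule set_pmf_of_set) (use ne[OF that] in auto)
  have rv1: "real (v - 1) = real v - 1" "real (v - 2) = real v - 2" using v by auto
  have vpos: "real v - 1 > 0" using v by simp
  show ?thesis
  proof (cases "odd m")
    case True
    let ?g = "\<lambda>r'. if r' = c then Caught m else Play c r'"
    have st: "game_step (Kv v) Kadj \<theta> m y = map_pmf ?g (pmf_of_set ({0..<v} - {r}))"
      unfolding game_step_def y using True Nr by simp
    have pre1: "?g -` {Caught m} = {c}" by (auto split: if_splits)
    have pre2: "({0..<v} - {r}) \<inter> ?g -` Valid v = {0..<v} - {r} - {c}"
      unfolding Valid_def using cr by auto
    have a: "pmf (game_step (Kv v) Kadj \<theta> m y) (Caught m) = 1 / (real v - 1)"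
      unfolding st pmf_map pre1 using cr ne[of r] by (simp add: measure_pmf_of_set cardN rv1)
    have b: "measure (game_step (Kv v) Kadj \<theta> m y) (Valid v) = (real v - 2) / (real v - 1)"
      unfolding st measure_map_pmf using cr ne[of r]
      by (simp add: measure_pmf_of_set pre2 cardN2 cardN rv1)
    have c: "set_pmf (game_step (Kv v) Kadj \<theta> m y) \<subseteq> Valid v \<union> {Caught m}"
      unfolding st using cr by (auto simp: Valid_def spm)
    show ?thesis using a b c True vpos by (simp add: prK_def field_simps)
  next
    case False
    let ?g = "\<lambda>c'. if c' = r then Caught m else Play c' r"
    let ?f = "\<lambda>b. map_pmf ?g (if b then pmf_of_set ({0..<v} - {c}) else pmf_of_set {r})"
    have st: "game_step (Kv v) Kadj \<theta> m y = bind_pmf (bernoulli_pmf \<theta>) ?f"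
      using False by (simp add: game_step_def y Nc T cong: if_cong)
    have pre1: "?g -` {Caught m} = {r}" by (auto split: if_splits)
    have pre2: "({0..<v} - {c}) \<inter> ?g -` Valid v = {0..<v} - {c} - {r}"
      unfolding Valid_def using cr by auto
    have pre3: "{r} \<inter> ?g -` Valid v = {}" by (auto simp: Valid_def)
    have a: "pmf (game_step (Kv v) Kadj \<theta> m y) (Caught m) = 1 / (real v - 1) * \<theta> + (1 - \<theta>)"
      unfolding st pmf_bind using th cr ne[of c]
      by (simp add: pmf_map pre1 measure_pmf_of_set cardN rv1)
    have b: "measure (game_step (Kv v) Kadj \<theta> m y) (Valid v) = (real v - 2) / (real v - 1) * \<theta>"
      unfolding st measure_bind_pmf' using th cr ne[of c]
      by (simp add: measure_pmf_of_set pre2 pre3 cardN2 cardN rv1 Int_commute)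
    have c: "set_pmf (game_step (Kv v) Kadj \<theta> m y) \<subseteq> Valid v \<union> {Caught m}"
      unfolding st using cr by (auto simp: Valid_def spm split: if_splits)
    show ?thesis using a b c False vpos by (simp add: prK_def field_simps)
  qed
qed


fun alphaK :: "nat \<Rightarrow> real \<Rightarrow> nat \<Rightarrow> real" where
  "alphaK v \<theta> 0 = 1"
| "alphaK v \<theta> (Suc n) = alphaK v \<theta> n * (1 - prK v \<theta> (Suc n))"

lemma step_caught: "game_step V adj \<theta> m (Caught k) = return_pmf (Caught k)"
  by (simp add: game_step_def)

lemma Caught_notin_Valid: "Caught k \<notin> Valid v"
  by (simp add: Valid_def)

lemma dist_inv:
  assumes v: "v \<ge> 2" and th: "0 \<le> \<theta>" "\<theta> \<le> 1" and cr: "c0 < v" "r0 < v" "c0 \<noteq> r0"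
  shows "set_pmf (game_dist (Kv v) Kadj \<theta> c0 r0 n) \<subseteq> Valid v \<union> {Caught m | m. m \<le> n}
    \<and> measure (game_dist (Kv v) Kadj \<theta> c0 r0 n) (Valid v) = alphaK v \<theta> n"
proof (induction n)
  case 0
  have "Play c0 r0 \<in> Valid v" using cr by (auto simp: Valid_def)
  then show ?case by (simp add: measure_return)
next
  case (Suc n)
  let ?M = "game_dist (Kv v) Kadj \<theta> c0 r0 n"
  have sub: "set_pmf ?M \<subseteq> Valid v \<union> {Caught m | m. m \<le> n}" using Suc.IH by blast
  have s1: "set_pmf (game_dist (Kv v) Kadj \<theta> c0 r0 (Suc n)) \<subseteq> Valid v \<union> {Caught m | m. m \<le> Suc n}"
  proof
    fix x assume "x \<in> set_pmf (game_dist (Kv v) Kadj \<theta> c0 r0 (Suc n))"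
    then obtain y where y: "y \<in> set_pmf ?M" and x: "x \<in> set_pmf (game_step (Kv v) Kadj \<theta> (Suc n) y)"
      by auto
    show "x \<in> Valid v \<union> {Caught m | m. m \<le> Suc n}"
    proof (cases "y \<in> Valid v")
      case True
      then show ?thesis using step_valid[OF v th True, of "Suc n"] x by auto
    next
      case False
      then obtain k where "y = Caught k" "k \<le> n" using y sub by auto
      then show ?thesis using x by (auto simp: step_caught)
    qed
  qed
  have "measure (game_dist (Kv v) Kadj \<theta> c0 r0 (Suc n)) (Valid v)
      = (\<integral>y. measure (game_step (Kv v) Kadj \<theta> (Suc n) y) (Valid v) \<partial>measure_pmf ?M)"
    by (simp add: measure_bind_pmf')
  also have "\<dots> = (1 - prK v \<theta> (Suc n)) * measure ?M (Valid v)"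
  proof (rule integral_pmf_indicator)
    fix y assume y: "y \<in> set_pmf ?M"
    show "measure (game_step (Kv v) Kadj \<theta> (Suc n) y) (Valid v) = (1 - prK v \<theta> (Suc n)) * indicator (Valid v) y"
    proof (cases "y \<in> Valid v")
      case True
      then show ?thesis using step_valid[OF v th True, of "Suc n"] by auto
    next
      case False
      then obtain k where "y = Caught k" using y sub by auto
      then show ?thesis using False by (simp add: step_caught measure_return Caught_notin_Valid)
    qed
  qed
  finally show ?case using s1 Suc.IH by simp
qed

lemma capture_K:
  assumes v: "v \<ge> 2" and th: "0 \<le> \<theta>" "\<theta> \<le> 1" and cr: "c0 < v" "r0 < v" "c0 \<noteq> r0"
  shows "capture_prob (Kv v) Kadj \<theta> c0 r0 (Suc n) = prK v \<theta> (Suc n) * alphaK v \<theta> n"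
proof -
  let ?M = "game_dist (Kv v) Kadj \<theta> c0 r0 n"
  have sub: "set_pmf ?M \<subseteq> Valid v \<union> {Caught m | m. m \<le> n}"
    and meas: "measure ?M (Valid v) = alphaK v \<theta> n" using dist_inv[OF assms] by auto
  have "capture_prob (Kv v) Kadj \<theta> c0 r0 (Suc n)
      = (\<integral>y. pmf (game_step (Kv v) Kadj \<theta> (Suc n) y) (Caught (Suc n)) \<partial>measure_pmf ?M)"
    by (simp add: capture_prob_def pmf_bind)
  also have "\<dots> = prK v \<theta> (Suc n) * measure ?M (Valid v)"
  proof (rule integral_pmf_indicator)
    fix y assume y: "y \<in> set_pmf ?M"
    show "pmf (game_step (Kv v) Kadj \<theta> (Suc n) y) (Caught (Suc n)) = prK v \<theta> (Suc n) * indicator (Valid v) y"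
    proof (cases "y \<in> Valid v")
      case True
      then show ?thesis using step_valid[OF v th True, of "Suc n"] by auto
    next
      case False
      then obtain k where "y = Caught k" "k \<le> n" using y sub by auto
      then show ?thesis using False by (simp add: step_caught)
    qed
  qed
  finally show ?thesis using meas by simp
qed

lemma capture_K0: "capture_prob V adj \<theta> c0 r0 0 = 0"
  by (simp add: capture_prob_def)


lemma sums_even_odd_split:
  fixes g :: "nat \<Rightarrow> real"
  assumes e: "(\<lambda>k. g (2 * k)) sums A" and o: "(\<lambda>k. g (2 * k + 1)) sums B"
  shows "g sums (A + B)"
proof -
  have eo: "(\<lambda>k. g (2 * k) + g (2 * k + 1)) sums (A + B)" using sums_add[OF e o] .
  have ps: "(\<Sum>i<2 * n. g i) = (\<Sum>k<n. g (2 * k) + g (2 * k + 1))" for n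
    using sum_split_even_odd[where f=g and g=g and n=n] by (simp add: sum.distrib)
  have L1: "(\<lambda>n. \<Sum>i<2 * n. g i) \<longlonglongrightarrow> A + B"
    using eo unfolding sums_def ps .
  have z: "(\<lambda>k. g (2 * k)) \<longlonglongrightarrow> 0" using e summable_LIMSEQ_zero sums_summable by blast
  have L2: "(\<lambda>n. \<Sum>i<2 * n + 1. g i) \<longlonglongrightarrow> A + B"
  proof -
    have "(\<lambda>n. (\<Sum>i<2 * n. g i) + g (2 * n)) \<longlonglongrightarrow> A + B + 0" by (rule tendsto_add[OF L1 z])
    then show ?thesis by simp
  qed
  show ?thesis unfolding sums_def
  proof (rule tendstoI)
    fix e :: real assume "e > 0"
    have E: "eventually (\<lambda>n. dist (\<Sum>i<2 * n. g i) (A + B) < e) sequentially"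
      using tendstoD[OF L1 \<open>e > 0\<close>] .
    have O: "eventually (\<lambda>n. dist (\<Sum>i<2 * n + 1. g i) (A + B) < e) sequentially"
      using tendstoD[OF L2 \<open>e > 0\<close>] .
    from E obtain N1 where N1: "\<And>n. n \<ge> N1 \<Longrightarrow> dist (\<Sum>i<2 * n. g i) (A + B) < e"
      by (auto simp: eventually_sequentially)
    from O obtain N2 where N2: "\<And>n. n \<ge> N2 \<Longrightarrow> dist (\<Sum>i<2 * n + 1. g i) (A + B) < e"
      by (auto simp: eventually_sequentially)
    show "eventually (\<lambda>n. dist (\<Sum>i<n. g i) (A + B) < e) sequentially"
      unfolding eventually_sequentially
    proof (intro exI allI impI)
      fix n assume n: "2 * N1 + 2 * N2 \<le> n"
      show "dist (\<Sum>i<n. g i) (A + B) < e"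
      proof (cases "even n")
        case True
        then obtain k where "n = 2 * k" by (auto elim: evenE)
        then show ?thesis using N1[of k] n by auto
      next
        case False
        then obtain k where "n = 2 * k + 1" by (auto elim: oddE)
        then show ?thesis using N2[of k] n by auto
      qed
    qed
  qed
qed

lemma alg_aux:
  fixes t p :: real assumes "t \<noteq> 0"
  shows "(2 * (1 / t^2) - 1 / t) * p + 2 * (1 / t^2) * (t - p) = (2 - p) / t"
  using assms by (simp add: field_simps power2_eq_square)

lemma series_abstract:
  fixes p q s :: real and g :: "nat \<Rightarrow> real"
  assumes s0: "0 \<le> s" and s1: "s < 1" and sd: "s = (1 - p) * (1 - q)"
    and ge: "\<And>k. g (2 * k) = s ^ k * p" and go: "\<And>k. g (2 * k + 1) = s ^ k * ((1 - p) * q)"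
  shows "g sums 1 \<and> (\<lambda>n. real (Suc n) * g n) sums ((2 - p) / (1 - s))"
proof -
  have ns: "norm s < 1" using s0 s1 by simp
  have G: "(\<lambda>k. s ^ k) sums (1 / (1 - s))" using geometric_sums[OF ns] by simp
  have D: "(\<lambda>k. real (Suc k) * s ^ k) sums (1 / (1 - s)^2)" using geometric_deriv_sums[OF ns] .
  have ne: "1 - s \<noteq> 0" using s1 by simp
  have ne3: "1 + s * s \<noteq> s * 2"
  proof -
    have "(1 - s) * (1 - s) > 0" using s1 by simp
    moreover have "(1 - s) * (1 - s) = 1 + s * s - s * 2" by (simp add: algebra_simps)
    ultimately show ?thesis by linarith
  qed
  have key: "(1 - p) * q = 1 - s - p" using sd by (simp add: algebra_simps)
  have e1: "(\<lambda>k. g (2 * k)) sums (1 / (1 - s) * p)" unfolding ge by (rule sums_mult2[OF G])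
  have o1: "(\<lambda>k. g (2 * k + 1)) sums (1 / (1 - s) * ((1 - p) * q))" unfolding go by (rule sums_mult2[OF G])
  have S1: "g sums 1"
  proof -
    have "g sums (1 / (1 - s) * p + 1 / (1 - s) * ((1 - p) * q))" by (rule sums_even_odd_split[OF e1 o1])
    also have "1 / (1 - s) * p + 1 / (1 - s) * ((1 - p) * q) = 1" using ne ne3 unfolding key by (simp add: field_simps)
    finally show ?thesis .
  qed
  have e2: "(\<lambda>k. real (Suc (2 * k)) * g (2 * k)) sums ((2 * (1 / (1 - s)^2) - 1 / (1 - s)) * p)"
  proof -
    have "(\<lambda>k. (2 * (real (Suc k) * s ^ k) - s ^ k) * p) sums ((2 * (1 / (1 - s)^2) - 1 / (1 - s)) * p)"
      by (intro sums_mult2 sums_diff sums_mult D G)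
    moreover have "(\<lambda>k. (2 * (real (Suc k) * s ^ k) - s ^ k) * p) = (\<lambda>k. real (Suc (2 * k)) * g (2 * k))"
      by (rule ext, unfold ge, simp add: algebra_simps)
    ultimately show ?thesis by simp
  qed
  have o2: "(\<lambda>k. real (Suc (2 * k + 1)) * g (2 * k + 1)) sums (2 * (1 / (1 - s)^2) * ((1 - p) * q))"
  proof -
    have "(\<lambda>k. 2 * (real (Suc k) * s ^ k) * ((1 - p) * q)) sums (2 * (1 / (1 - s)^2) * ((1 - p) * q))"
      by (intro sums_mult2 sums_mult D)
    moreover have "(\<lambda>k. 2 * (real (Suc k) * s ^ k) * ((1 - p) * q)) = (\<lambda>k. real (Suc (2 * k + 1)) * g (2 * k + 1))"
      by (rule ext, unfold go, simp add: algebra_simps)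
    ultimately show ?thesis by simp
  qed
  have S2: "(\<lambda>n. real (Suc n) * g n) sums ((2 - p) / (1 - s))"
  proof -
    have "(\<lambda>n. real (Suc n) * g n) sums ((2 * (1 / (1 - s)^2) - 1 / (1 - s)) * p + 2 * (1 / (1 - s)^2) * ((1 - p) * q))"
      by (rule sums_even_odd_split[OF e2 o2])
    also have "(2 * (1 / (1 - s)^2) - 1 / (1 - s)) * p + 2 * (1 / (1 - s)^2) * ((1 - p) * q) = (2 - p) / (1 - s)"
      using alg_aux[OF ne, of p] unfolding key by simp
    finally show ?thesis .
  qed
  show ?thesis using S1 S2 by blast
qed


lemma final_alg:
  fixes w \<theta> :: real assumes w: "w \<ge> 1" and th: "0 \<le> \<theta>" "\<theta> \<le> 1"
  shows "(2 - 1 / w) / (1 - (1 - 1 / w) * (1 - (\<theta> / w + (1 - \<theta>))))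
       = (2 * (w + 1) - 3) * w / (w^2 - \<theta> * (w + 1 - 2)^2)"
proof -
  have d: "w^2 - \<theta> * (w - 1)^2 > 0"
  proof -
    have "\<theta> * (w - 1)^2 \<le> (w - 1)^2" using th by (intro mult_left_le_one_le) auto
    moreover have "(w - 1)^2 < w^2" using w by (simp add: power2_eq_square algebra_simps)
    ultimately show ?thesis by linarith
  qed
  have w0: "w \<noteq> 0" using w by simp
  have dn: "w^2 - \<theta> * (w - 1)^2 \<noteq> 0" using d by simp
  have eq1: "1 - (1 - 1 / w) * (1 - (\<theta> / w + (1 - \<theta>))) = (w^2 - \<theta> * (w - 1)^2) / w^2"
    using w0 by (simp add: field_simps power2_eq_square)
  have eq2: "2 - 1 / w = (2 * w - 1) / w" using w0 by (simp add: field_simps)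
  have eq3: "w + 1 - 2 = w - 1" "2 * (w + 1) - 3 = 2 * w - 1" by simp_all
  have "(2 - 1 / w) / (1 - (1 - 1 / w) * (1 - (\<theta> / w + (1 - \<theta>))))
      = ((2 * w - 1) / w) / ((w^2 - \<theta> * (w - 1)^2) / w^2)" by (simp only: eq1 eq2)
  also have "\<dots> = (2 * w - 1) * w / (w^2 - \<theta> * (w - 1)^2)"
    using w0 dn by (simp add: power2_eq_square)
  finally show ?thesis by (simp only: eq3)
qed

theorem mainTheorem2:
  fixes v :: nat and \<theta> :: real and c0 r0 :: nat
  assumes "v \<ge> 2" and "0 \<le> \<theta>" and "\<theta> \<le> 1"
    and "c0 \<in> Kv v" and "r0 \<in> Kv v" and "c0 \<noteq> r0"
  shows "(\<lambda>n. capture_prob (Kv v) Kadj \<theta> c0 r0 n) sums 1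
    \<and> (\<lambda>n. real n * capture_prob (Kv v) Kadj \<theta> c0 r0 n) sums
        ((2 * real v - 3) * (real v - 1) / ((real v - 1)^2 - \<theta> * (real v - 2)^2))"
proof -
  have v: "v \<ge> 2" and th: "0 \<le> \<theta>" "\<theta> \<le> 1" and cr: "c0 < v" "r0 < v" "c0 \<noteq> r0"
    using assms by (auto simp: Kv_def)
  define p where "p = 1 / (real v - 1)"
  define q where "q = \<theta> / (real v - 1) + (1 - \<theta>)"
  define s where "s = (1 - p) * (1 - q)"
  define g where "g n = capture_prob (Kv v) Kadj \<theta> c0 r0 (Suc n)" for n
  have prO: "prK v \<theta> (2 * k + 1) = p" for k by (simp add: prK_def p_def)
  have prE: "prK v \<theta> (Suc (2 * k + 1)) = q" for k by (simp add: prK_def q_def)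
  have al: "alphaK v \<theta> (2 * k) = s ^ k \<and> alphaK v \<theta> (2 * k + 1) = s ^ k * (1 - p)" for k
  proof (induction k)
    case 0 then show ?case using prO[of 0] by simp
  next
    case (Suc k)
    have e: "2 * Suc k = Suc (2 * k + 1)" by simp
    have "alphaK v \<theta> (Suc (2 * k + 1)) = alphaK v \<theta> (2 * k + 1) * (1 - prK v \<theta> (Suc (2 * k + 1)))"
      by (rule alphaK.simps(2))
    also have "\<dots> = s ^ k * (1 - p) * (1 - q)" using conjunct2[OF Suc.IH] prE[of k] by (simp del: alphaK.simps)
    also have "\<dots> = s ^ Suc k" by (simp add: s_def)
    finally have a: "alphaK v \<theta> (2 * Suc k) = s ^ Suc k" unfolding e .
    have "alphaK v \<theta> (Suc (2 * Suc k)) = alphaK v \<theta> (2 * Suc k) * (1 - prK v \<theta> (Suc (2 * Suc k)))"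
      by (rule alphaK.simps(2))
    also have "\<dots> = s ^ Suc k * (1 - p)" using a prO[of "Suc k"] by simp
    finally have b: "alphaK v \<theta> (2 * Suc k + 1) = s ^ Suc k * (1 - p)" by simp
    show ?case using a b by blast
  qed
  have ge: "g (2 * k) = s ^ k * p" for k
    unfolding g_def using capture_K[OF v th cr, of "2 * k"] al[of k] prO[of k] by simp
  have go: "g (2 * k + 1) = s ^ k * ((1 - p) * q)" for k
    unfolding g_def using capture_K[OF v th cr, of "2 * k + 1"] al[of k] prE[of k] by (simp del: alphaK.simps)
  have vr: "real v - 1 \<ge> 1" using v by simp
  have p1: "0 \<le> 1 - p" "1 - p < 1" using vr by (auto simp: p_def field_simps)
  have q1: "1 - q = \<theta> * (1 - p)" by (simp add: q_def p_def field_simps)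
  have s0: "0 \<le> s" unfolding s_def q1 using p1 th by simp
  have s1: "s < 1"
  proof -
    have "s \<le> (1 - p)" unfolding s_def q1 using p1 th
      by (simp add: mult_left_le mult_le_one)
    then show ?thesis using p1 by linarith
  qed
  have R: "g sums 1 \<and> (\<lambda>n. real (Suc n) * g n) sums ((2 - p) / (1 - s))"
    by (rule series_abstract[OF s0 s1 s_def ge go])
  have val: "(2 - p) / (1 - s) = (2 * real v - 3) * (real v - 1) / ((real v - 1)^2 - \<theta> * (real v - 2)^2)"
    using final_alg[OF vr th] unfolding s_def p_def q_def by (simp add: algebra_simps)
  have gfun: "g = (\<lambda>n. capture_prob (Kv v) Kadj \<theta> c0 r0 (Suc n))" by (rule ext) (simp add: g_def)
  have A: "(\<lambda>n. capture_prob (Kv v) Kadj \<theta> c0 r0 n) sums 1"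
    using R sums_Suc_iff[of "\<lambda>n. capture_prob (Kv v) Kadj \<theta> c0 r0 n" 1]
    by (simp add: gfun capture_K0)
  have B: "(\<lambda>n. real n * capture_prob (Kv v) Kadj \<theta> c0 r0 n) sums ((2 - p) / (1 - s))"
    using R sums_Suc_iff[of "\<lambda>n. real n * capture_prob (Kv v) Kadj \<theta> c0 r0 n" "(2 - p) / (1 - s)"]
    by (simp add: gfun capture_K0)
  show ?thesis using A B val by simp
qed

end
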